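(* For $n\geq 4$, let $A_n$ be the split graph with stable set $S=\{s_1,\dots,s_n\}$, central clique $K=\{v_{ij}:1\le i<j\le n\}$, and $N(v_{ij})\cap S=\{s_i,s_j\}$ for all $1\le i<j\le n$. Then $A_n\in SVS$, the branch graph $B(A_n/K)$ is the complete graph on $\{s_1,\dots,s_n\}$, and $A_n\in[n,2,1]\setminus[n-1,2,1]$.
   Context: A graph is split if its vertex set partitions into a stable set $S$ and a clique $K$ (central clique). For $n\geq 4$, the $n$-sun $S_n$ is the split graph with stable set $\{s_1,\dots,s_n\}$, central clique $\{v_1,\dots,v_n\}$, $N(s_i)=\{v_i,v_{i+1}\}$ for $1\le i\le n-1$ and $N(s_n)=\{v_n,v_1\}$. A split graph $G$ with partition $(S,K)$ belongs to $SVS$ if: $G$ is VPT (a vertex-intersection graph of paths in a tree); every $v\in K$ satisfies $|N(v)\cap S|\le 2$; and whenever $S_k$ with $k=4$ or $k$ odd, $k\ge 5$, is an induced subgraph of $G$, some $v\in K$ is adjacent to two non-consecutive vertices of the stable set of that $S_k$. $[h,2,1]$ is the class of vertex-intersection graphs of paths in a tree of maximum degree at most $h$. For a clique $C$ of $G$, the branch graph $B(G/C)$ has vertex set the vertices of $V(G)\setminus C$ adjacent to some vertex of $C$, two such vertices $v,w$ being adjacent iff (1) $vw\notin E(G)$; (2) some vertex of $C$ is adjacent to both; (3) there exist $v',w'\in C$ with $v'$ adjacent to $v$ but not $w$, and $w'$ adjacent to $w$ but not $v$. *)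

theory Defs
  imports Main
begin

text \<open>Graphs are given by a vertex set V and an adjacency predicate E
 (symmetric, irreflexive on V).\<close>

definition split_partition :: "'a set \<Rightarrow> ('a \<Rightarrow> 'a \<Rightarrow> bool) \<Rightarrow> 'a set \<Rightarrow> 'a set \<Rightarrow> bool" where
  "split_partition V E S K \<longleftrightarrow> S \<inter> K = {} \<and> S \<union> K = V
     \<and> (\<forall>x\<in>S. \<forall>y\<in>S. \<not> E x y)
     \<and> (\<forall>x\<in>K. \<forall>y\<in>K. x \<noteq> y \<longrightarrow> E x y)"

definition graph_path :: "nat set \<Rightarrow> (nat \<Rightarrow> nat \<Rightarrow> bool) \<Rightarrow> nat list \<Rightarrow> bool" where
  "graph_path T F xs \<longleftrightarrow> xs \<noteq> [] \<and> distinct xs \<and> set xs \<subseteq> T \<and> successively F xs"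

definition is_tree :: "nat set \<Rightarrow> (nat \<Rightarrow> nat \<Rightarrow> bool) \<Rightarrow> bool" where
  "is_tree T F \<longleftrightarrow> finite T \<and> T \<noteq> {}
     \<and> (\<forall>x y. F x y \<longrightarrow> x \<in> T \<and> y \<in> T \<and> x \<noteq> y \<and> F y x)
     \<and> (\<forall>u\<in>T. \<forall>v\<in>T. \<exists>xs. graph_path T F xs \<and> hd xs = u \<and> last xs = v)
     \<and> \<not> (\<exists>xs. graph_path T F xs \<and> length xs \<ge> 3 \<and> F (last xs) (hd xs))"

definition max_degree_le :: "nat set \<Rightarrow> (nat \<Rightarrow> nat \<Rightarrow> bool) \<Rightarrow> nat \<Rightarrow> bool" where
  "max_degree_le T F h \<longleftrightarrow> (\<forall>x\<in>T. card {y\<in>T. F x y} \<le> h)"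

definition is_tree_path :: "nat set \<Rightarrow> (nat \<Rightarrow> nat \<Rightarrow> bool) \<Rightarrow> nat set \<Rightarrow> bool" where
  "is_tree_path T F P \<longleftrightarrow> (\<exists>xs. graph_path T F xs \<and> P = set xs)"

definition vpt_model :: "'a set \<Rightarrow> ('a \<Rightarrow> 'a \<Rightarrow> bool) \<Rightarrow> nat set \<Rightarrow> (nat \<Rightarrow> nat \<Rightarrow> bool) \<Rightarrow> ('a \<Rightarrow> nat set) \<Rightarrow> bool" where
  "vpt_model V E T F P \<longleftrightarrow> is_tree T F
     \<and> (\<forall>v\<in>V. is_tree_path T F (P v))
     \<and> (\<forall>u\<in>V. \<forall>v\<in>V. u \<noteq> v \<longrightarrow> (E u v \<longleftrightarrow> P u \<inter> P v \<noteq> {}))"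

definition VPT :: "'a set \<Rightarrow> ('a \<Rightarrow> 'a \<Rightarrow> bool) \<Rightarrow> bool" where
  "VPT V E \<longleftrightarrow> (\<exists>T F P. vpt_model V E T F P)"

definition in_h21 :: "nat \<Rightarrow> 'a set \<Rightarrow> ('a \<Rightarrow> 'a \<Rightarrow> bool) \<Rightarrow> bool" where
  "in_h21 h V E \<longleftrightarrow> (\<exists>T F P. vpt_model V E T F P \<and> max_degree_le T F h)"

definition induced_sun :: "'a set \<Rightarrow> ('a \<Rightarrow> 'a \<Rightarrow> bool) \<Rightarrow> nat \<Rightarrow> (nat \<Rightarrow> 'a) \<Rightarrow> (nat \<Rightarrow> 'a) \<Rightarrow> bool" where
  "induced_sun V E k s c \<longleftrightarrow>
     (\<forall>i<k. s i \<in> V \<and> c i \<in> V) \<and> inj_on s {..<k} \<and> inj_on c {..<k}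
     \<and> (\<forall>i<k. \<forall>j<k. s i \<noteq> c j)
     \<and> (\<forall>i<k. \<forall>j<k. \<not> E (s i) (s j))
     \<and> (\<forall>i<k. \<forall>j<k. i \<noteq> j \<longrightarrow> E (c i) (c j))
     \<and> (\<forall>i<k. \<forall>j<k. E (s i) (c j) \<longleftrightarrow> (j = i \<or> j = Suc i mod k))"

definition SVS :: "'a set \<Rightarrow> ('a \<Rightarrow> 'a \<Rightarrow> bool) \<Rightarrow> 'a set \<Rightarrow> 'a set \<Rightarrow> bool" where
  "SVS V E S K \<longleftrightarrow> split_partition V E S K \<and> VPT V E
     \<and> (\<forall>v\<in>K. card {x\<in>S. E v x} \<le> 2)
     \<and> (\<forall>k s c. (k = 4 \<or> (odd k \<and> k \<ge> 5)) \<and> induced_sun V E k s c \<longrightarrow>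
          (\<exists>v\<in>K. \<exists>i<k. \<exists>j<k. i \<noteq> j \<and> j \<noteq> Suc i mod k \<and> i \<noteq> Suc j mod k
                   \<and> E v (s i) \<and> E v (s j)))"

definition branch_vertices :: "'a set \<Rightarrow> ('a \<Rightarrow> 'a \<Rightarrow> bool) \<Rightarrow> 'a set \<Rightarrow> 'a set" where
  "branch_vertices V E C = {x \<in> V - C. \<exists>c\<in>C. E x c}"

definition branch_adj :: "('a \<Rightarrow> 'a \<Rightarrow> bool) \<Rightarrow> 'a set \<Rightarrow> 'a \<Rightarrow> 'a \<Rightarrow> bool" where
  "branch_adj E C v w \<longleftrightarrow> \<not> E v w \<and> (\<exists>c\<in>C. E c v \<and> E c w)
     \<and> (\<exists>v'\<in>C. E v' v \<and> \<not> E v' w) \<and> (\<exists>w'\<in>C. E w' w \<and> \<not> E w' v)"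

datatype avert = Sv nat | Cv nat nat

definition An_S :: "nat \<Rightarrow> avert set" where
  "An_S n = {Sv i | i. 1 \<le> i \<and> i \<le> n}"

definition An_K :: "nat \<Rightarrow> avert set" where
  "An_K n = {Cv i j | i j. 1 \<le> i \<and> i < j \<and> j \<le> n}"

definition An_V :: "nat \<Rightarrow> avert set" where
  "An_V n = An_S n \<union> An_K n"

fun An_E :: "avert \<Rightarrow> avert \<Rightarrow> bool" where
  "An_E (Sv i) (Sv j) = False"
| "An_E (Sv i) (Cv j k) = (i = j \<or> i = k)"
| "An_E (Cv j k) (Sv i) = (i = j \<or> i = k)"
| "An_E (Cv i j) (Cv k l) = ((i, j) \<noteq> (k, l))"

end

theory Submission
  imports Defs
begin


locale tr =
  fixes T :: "nat set" and F :: "nat \<Rightarrow> nat \<Rightarrow> bool"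
  assumes tree: "is_tree T F"
begin

lemma F_T: "F u v \<Longrightarrow> u \<in> T \<and> v \<in> T \<and> u \<noteq> v \<and> F v u"
  using tree unfolding is_tree_def by blast

lemma T_conn: "u \<in> T \<Longrightarrow> v \<in> T \<Longrightarrow> \<exists>xs. graph_path T F xs \<and> hd xs = u \<and> last xs = v"
  using tree unfolding is_tree_def by blast

lemma acyc: "graph_path T F xs \<Longrightarrow> length xs \<ge> 3 \<Longrightarrow> F (last xs) (hd xs) \<Longrightarrow> False"
  using tree unfolding is_tree_def by blast

definition conn :: "nat set \<Rightarrow> nat \<Rightarrow> nat \<Rightarrow> bool" where
  "conn Q = (\<lambda>u v. F u v \<and> u \<in> Q \<and> v \<in> Q)\<^sup>*\<^sup>*"

lemma conn_refl: "conn Q a a" by (simp add: conn_def)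

lemma conn_trans: "conn Q a b \<Longrightarrow> conn Q b c \<Longrightarrow> conn Q a c"
  unfolding conn_def by (rule rtranclp_trans)

lemma conn_step: "F a b \<Longrightarrow> a \<in> Q \<Longrightarrow> b \<in> Q \<Longrightarrow> conn Q a b"
  unfolding conn_def by (rule r_into_rtranclp) simp

lemma conn_sym1: "conn Q a b \<Longrightarrow> conn Q b a"
  unfolding conn_def
proof (induction rule: rtranclp_induct)
  case base then show ?case by simp
next
  case (step y z)
  then have "(\<lambda>u v. F u v \<and> u \<in> Q \<and> v \<in> Q) z y" using F_T by blast
  then show ?case using step(3) converse_rtranclp_into_rtranclp[of "(\<lambda>u v. F u v \<and> u \<in> Q \<and> v \<in> Q)" z y a] by blast
qed

lemma conn_sym: "conn Q a b = conn Q b a" using conn_sym1 by blast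

lemma conn_mono: "Q \<subseteq> Q' \<Longrightarrow> conn Q a b \<Longrightarrow> conn Q' a b"
  unfolding conn_def by (erule rtranclp_mono[THEN predicate2D, rotated]) auto

lemma connL: "successively F L \<Longrightarrow> set L \<subseteq> Q \<Longrightarrow> a \<in> set L \<Longrightarrow> b \<in> set L \<Longrightarrow> conn Q a b"
proof (induction L arbitrary: a b)
  case Nil then show ?case by simp
next
  case (Cons x L)
  show ?case
  proof (cases "L = []")
    case True then show ?thesis using Cons by (simp add: conn_refl)
  next
    case False
    have e: "F x (hd L)" and s: "successively F L" using Cons(2) False by (auto simp: successively_Cons)
    have hL: "hd L \<in> set L" using False by simp
    have IH: "\<And>a b. a \<in> set L \<Longrightarrow> b \<in> set L \<Longrightarrow> conn Q a b" using Cons s by auto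
    have xc: "\<And>b. b \<in> set (x # L) \<Longrightarrow> conn Q x b"
    proof -
      fix b assume "b \<in> set (x # L)"
      then have "b = x \<or> b \<in> set L" by simp
      then show "conn Q x b"
      proof
        assume "b = x" then show ?thesis by (simp add: conn_refl)
      next
        assume "b \<in> set L"
        moreover have "conn Q x (hd L)" using conn_step[OF e] Cons(3) hL by auto
        ultimately show ?thesis using IH[OF hL] conn_trans by blast
      qed
    qed
    show ?thesis using Cons(4,5) xc IH conn_sym by (metis set_ConsD)
  qed
qed

lemma path_of_conn:
  assumes "conn Q a b" "a \<in> Q" "Q \<subseteq> T"
  shows "\<exists>p. graph_path T F p \<and> hd p = a \<and> last p = b \<and> set p \<subseteq> Q"
  using assms(1) unfolding conn_def
proof (induction rule: rtranclp_induct)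
  case base
  then show ?case using assms by (intro exI[of _ "[a]"]) (auto simp: graph_path_def)
next
  case (step y z)
  then obtain p where p: "graph_path T F p" "hd p = a" "last p = y" "set p \<subseteq> Q" by blast
  show ?case
  proof (cases "z \<in> set p")
    case True
    then obtain p1 p2 where pp: "p = p1 @ z # p2" by (meson split_list)
    have "p = (p1 @ [z]) @ p2" using pp by simp
    then have "graph_path T F (p1 @ [z])" using p(1) unfolding graph_path_def
      by (metis Nil_is_append_conv distinct_append set_append le_sup_iff not_Cons_self2 successively_append_iff)
    moreover have "hd (p1 @ [z]) = a" using p(2) pp by (cases p1) auto
    ultimately show ?thesis using p pp by (intro exI[of _ "p1 @ [z]"]) auto
  next
    case False
    have "graph_path T F (p @ [z])" using p(1) False step(2) assms(3) unfolding graph_path_def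
      by (auto simp: successively_append_iff p(3))
    moreover have "hd (p @ [z]) = a" using p(1,2) by (auto simp: graph_path_def)
    ultimately show ?thesis using p step(2) by (intro exI[of _ "p @ [z]"]) auto
  qed
qed

lemma gp_T: "graph_path T F xs \<Longrightarrow> set xs \<subseteq> T" by (simp add: graph_path_def)
lemma gp_succ: "graph_path T F xs \<Longrightarrow> successively F xs" by (simp add: graph_path_def)

lemma sep:
  assumes g: "graph_path T F xs" and z: "z \<in> set xs" "z \<noteq> hd xs" "z \<noteq> last xs"
  shows "\<not> conn (T - {z}) (hd xs) (last xs)"
proof
  assume c: "conn (T - {z}) (hd xs) (last xs)"
  obtain pre suf where xs: "xs = pre @ z # suf" using z(1) by (meson split_list)
  have pre: "pre \<noteq> []" using z(2) xs by auto
  have suf: "suf \<noteq> []" using z(3) xs by auto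
  have d: "distinct xs" "set xs \<subseteq> T" "successively F xs" using g by (auto simp: graph_path_def)
  have zpre: "z \<notin> set pre" "z \<notin> set suf" using d(1) xs by auto
  have sp: "successively F pre" "successively F (z # suf)" "F (last pre) z"
    using d(3) pre unfolding xs by (auto simp: successively_append_iff)
  have ss: "successively F suf" "F z (hd suf)" using sp(2) suf by (auto simp: successively_Cons)
  have pT: "set pre \<subseteq> T - {z}" "set suf \<subseteq> T - {z}" using d(2) zpre xs by auto
  have c1: "conn (T - {z}) (last pre) (hd xs)"
    using connL[OF sp(1) pT(1)] pre xs by (simp add: hd_append)
  have c2: "conn (T - {z}) (last xs) (hd suf)"
    using connL[OF ss(1) pT(2)] suf xs by simp
  have cuw: "conn (T - {z}) (last pre) (hd suf)" using c1 c c2 conn_trans by blast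
  have uT: "last pre \<in> T - {z}" using pT(1) pre last_in_set by blast
  obtain p where p: "graph_path T F p" "hd p = last pre" "last p = hd suf" "set p \<subseteq> T - {z}"
    using path_of_conn[OF cuw uT] by auto
  have uw: "last pre \<noteq> hd suf"
  proof
    assume e: "last pre = hd suf"
    have "last pre \<in> set pre" "hd suf \<in> set suf" using pre suf by auto
    then show False using d(1) e unfolding xs by auto
  qed
  have pne: "p \<noteq> []" using p by (simp add: graph_path_def)
  have lp: "length p \<ge> 2"
  proof (rule ccontr)
    assume "\<not> 2 \<le> length p"
    moreover have "length p \<noteq> 0" using pne by simp
    ultimately have "length p = 1" by linarith
    then have "hd p = last p" by (cases p) auto
    then show False using p uw by simp
  qed
  have zp: "z \<notin> set p" using p(4) by auto
  have zT: "z \<in> T" using d(2) xs by auto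
  have "F z (hd p)" using F_T[OF sp(3)] p(2) by simp
  then have "graph_path T F (z # p)"
    using p(1,4) pne zp zT unfolding graph_path_def
    by (simp add: successively_Cons)
  moreover have "length (z # p) \<ge> 3" using lp by simp
  moreover have "F (last (z # p)) (hd (z # p))" using p(3) F_T[OF ss(2)] pne by simp
  ultimately show False using acyc by blast
qed


lemma successively_sub:
  assumes "successively P L" shows "successively P (drop i (take k L))"
  unfolding successively_conv_nth
proof (intro allI impI)
  fix m assume m: "Suc m < length (drop i (take k L))"
  then have il: "i \<le> length (take k L)" "i + Suc m < k" by auto
  then have "drop i (take k L) ! m = L ! (i + m)" "drop i (take k L) ! Suc m = L ! Suc (i + m)"
    by (simp_all add: nth_drop[OF il(1)] nth_take)
  moreover have "Suc (i + m) < length L" using m by auto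
  ultimately show "P (drop i (take k L) ! m) (drop i (take k L) ! Suc m)"
    using assms unfolding successively_conv_nth by simp
qed

lemma mid:
  assumes g: "graph_path T F L" and ij: "i < j" "j < k" "k < length L"
  shows "\<not> conn (T - {L ! j}) (L ! i) (L ! k)"
proof -
  define g where "g = drop i (take (Suc k) L)"
  have lg: "length g = Suc k - i" using ij by (simp add: g_def)
  have gp: "graph_path T F g" using g ij unfolding g_def graph_path_def
    by (auto simp: successively_sub dest: in_set_dropD in_set_takeD)
  have h: "hd g = L ! i" using ij unfolding g_def by (simp add: hd_drop_conv_nth)
  have l: "last g = L ! k" using ij lg unfolding g_def
    by (simp add: last_conv_nth)
  have jg: "L ! j = g ! (j - i)" using ij unfolding g_def by simp
  have jin: "L ! j \<in> set g" using jg lg ij by simp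
  have dL: "distinct L" using g by (simp add: graph_path_def)
  have "L ! j \<noteq> L ! i" "L ! j \<noteq> L ! k" using dL ij by (auto simp: nth_eq_iff_index_eq)
  then show ?thesis using sep[OF gp jin] h l by simp
qed

lemma between:
  assumes g: "graph_path T F L" and abc: "a \<in> set L" "b \<in> set L" "c \<in> set L"
    and d: "a \<noteq> b" "b \<noteq> c" "a \<noteq> c"
  shows "\<not> conn (T - {b}) a c \<or> \<not> conn (T - {a}) b c \<or> \<not> conn (T - {c}) a b"
proof -
  obtain ia where ia: "ia < length L" "L ! ia = a" using abc by (meson in_set_conv_nth)
  obtain ib where ib: "ib < length L" "L ! ib = b" using abc by (meson in_set_conv_nth)
  obtain ic where ic: "ic < length L" "L ! ic = c" using abc by (meson in_set_conv_nth)
  have "ia \<noteq> ib" "ib \<noteq> ic" "ia \<noteq> ic" using ia ib ic d by auto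
  then consider "ia < ib \<and> ib < ic" | "ic < ib \<and> ib < ia" | "ib < ia \<and> ia < ic"
    | "ic < ia \<and> ia < ib" | "ia < ic \<and> ic < ib" | "ib < ic \<and> ic < ia" by linarith
  then show ?thesis
  proof cases
    case 1 then show ?thesis using mid[OF g, of ia ib ic] ia ib ic by auto
  next
    case 2 then show ?thesis using mid[OF g, of ic ib ia] ia ib ic conn_sym by auto
  next
    case 3 then show ?thesis using mid[OF g, of ib ia ic] ia ib ic by auto
  next
    case 4 then show ?thesis using mid[OF g, of ic ia ib] ia ib ic conn_sym by auto
  next
    case 5 then show ?thesis using mid[OF g, of ia ic ib] ia ib ic by auto
  next
    case 6 then show ?thesis using mid[OF g, of ib ic ia] ia ib ic conn_sym by auto
  qed
qed


definition convex :: "nat set \<Rightarrow> bool" where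
  "convex Q \<longleftrightarrow> Q \<subseteq> T \<and> (\<forall>g. graph_path T F g \<and> hd g \<in> Q \<and> last g \<in> Q \<longrightarrow> set g \<subseteq> Q)"

lemma convex_path: assumes L: "graph_path T F L" shows "convex (set L)"
  unfolding convex_def
proof (intro conjI allI impI)
  show "set L \<subseteq> T" using L by (simp add: graph_path_def)
next
  fix g assume a: "graph_path T F g \<and> hd g \<in> set L \<and> last g \<in> set L"
  show "set g \<subseteq> set L"
  proof
    fix z assume z: "z \<in> set g"
    show "z \<in> set L"
    proof (rule ccontr)
      assume n: "z \<notin> set L"
      have "set L \<subseteq> T - {z}" using n L by (auto simp: graph_path_def)
      then have "conn (T - {z}) (hd g) (last g)" using connL[of L "T - {z}" "hd g" "last g"] L a by (simp add: graph_path_def)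
      moreover have "z \<noteq> hd g" "z \<noteq> last g" using a n by auto
      ultimately show False using sep a z by blast
    qed
  qed
qed

lemma convex_T: "convex T" unfolding convex_def by (auto simp: graph_path_def)

lemma convex_Int: "convex A \<Longrightarrow> convex B \<Longrightarrow> convex (A \<inter> B)"
  unfolding convex_def by blast

lemma convex_conn: assumes "convex Q" "u \<in> Q" "v \<in> Q" "Q \<subseteq> Q'" shows "conn Q' u v"
proof -
  obtain g where g: "graph_path T F g" "hd g = u" "last g = v"
    using T_conn assms unfolding convex_def by blast
  then have "set g \<subseteq> Q" using assms unfolding convex_def by blast
  then show ?thesis using connL g assms(4) by (metis gp_succ hd_in_set last_in_set graph_path_def subset_trans)
qed


lemma walk_meet:
  assumes "successively F g" "g \<noteq> []" "hd g \<in> B" "last g \<in> C" "set g \<subseteq> B \<union> C"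
    "\<And>u w. u \<in> B - C \<Longrightarrow> w \<in> C - B \<Longrightarrow> F u w \<Longrightarrow> False"
  shows "\<exists>z \<in> set g. z \<in> B \<inter> C"
  using assms(1-5)
proof (induction g)
  case Nil then show ?case by simp
next
  case (Cons x g)
  show ?case
  proof (cases "x \<in> C")
    case True then show ?thesis using Cons by auto
  next
    case False
    then have gne: "g \<noteq> []" using Cons by auto
    have e: "F x (hd g)" "successively F g" using Cons(2) gne by (auto simp: successively_Cons)
    have "hd g \<in> B"
    proof (rule ccontr)
      assume "hd g \<notin> B"
      then have "hd g \<in> C - B" using Cons(6) gne by (metis Diff_iff Un_iff hd_in_set list.set_intros(2) subsetD)
      then show False using assms(6)[of x "hd g"] e False Cons(4) by simp
    qed
    then show ?thesis using Cons.IH[OF e(2) gne] Cons gne by auto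
  qed
qed


lemma helly3:
  assumes cv: "convex A" "convex B" "convex C"
    and a: "a \<in> A" "a \<in> B" and b: "b \<in> B" "b \<in> C" and c: "c \<in> A" "c \<in> C"
  shows "\<exists>x. x \<in> A \<and> x \<in> B \<and> x \<in> C"
proof -
  have ABC: "A \<subseteq> T" "B \<subseteq> T" "C \<subseteq> T" using cv by (auto simp: convex_def)
  have noedge: False if u: "u \<in> B - C" and w: "w \<in> C - B" and e: "F u w" for u w
  proof -
    obtain p1 where p1: "graph_path T F p1" "hd p1 = b" "last p1 = u"
      using T_conn b u ABC by blast
    have sB: "set p1 \<subseteq> B" using cv(2) p1 b u unfolding convex_def by blast
    have wn: "w \<notin> set p1" using sB w by auto
    have p1ne: "p1 \<noteq> []" using p1 by (simp add: graph_path_def)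
    have wT: "w \<in> T" using F_T[OF e] by simp
    have g': "graph_path T F (p1 @ [w])" using p1 wn e wT p1ne unfolding graph_path_def
      by (simp add: successively_append_iff)
    have "u \<in> set (p1 @ [w])" using p1(3) p1ne last_in_set by fastforce
    moreover have "u \<noteq> hd (p1 @ [w])" using p1(2) p1ne u b by auto
    moreover have "u \<noteq> last (p1 @ [w])" using F_T[OF e] by simp
    moreover have "hd (p1 @ [w]) = b" using p1(2) p1ne by simp
    ultimately have "\<not> conn (T - {u}) b w" using sep[OF g'] by simp
    moreover have "C \<subseteq> T - {u}" using u ABC by auto
    then have "conn (T - {u}) b w" using convex_conn[OF cv(3) b(2), of w] w by auto
    ultimately show False by simp
  qed
  obtain g where g: "graph_path T F g" "hd g = a" "last g = c"
    using T_conn a c ABC by blast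
  have gA: "set g \<subseteq> A" using cv(1) g a c unfolding convex_def by blast
  have gBC: "set g \<subseteq> B \<union> C"
  proof
    fix z assume z: "z \<in> set g"
    show "z \<in> B \<union> C"
    proof (rule ccontr)
      assume n: "z \<notin> B \<union> C"
      have "B \<subseteq> T - {z}" "C \<subseteq> T - {z}" using n ABC by auto
      then have "conn (T - {z}) a b" "conn (T - {z}) b c"
        using convex_conn[OF cv(2) a(2) b(1)] convex_conn[OF cv(3) b(2) c(2)] by auto
      then have "conn (T - {z}) a c" using conn_trans by blast
      moreover have "z \<noteq> a" "z \<noteq> c" using n a c by auto
      ultimately show False using sep[OF g(1) z] g by simp
    qed
  qed
  obtain z where "z \<in> set g" "z \<in> B \<inter> C"
    using walk_meet[of g B C] g a c gBC noedge by (auto simp: graph_path_def)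
  then show ?thesis using gA by blast
qed


lemma helly_gen:
  assumes "finite \<A>"
  shows "convex D \<Longrightarrow> (\<And>A. A \<in> \<A> \<Longrightarrow> convex A) \<Longrightarrow>
     (\<And>A B. A \<in> \<A> \<Longrightarrow> B \<in> \<A> \<Longrightarrow> A \<inter> B \<inter> D \<noteq> {}) \<Longrightarrow> D \<noteq> {}
      \<Longrightarrow> (\<exists>x\<in>D. \<forall>A\<in>\<A>. x \<in> A)"
  using assms
proof (induction \<A> arbitrary: D rule: finite_induct)
  case empty then show ?case by blast
next
  case (insert A \<A>)
  have cA: "convex A" using insert.prems(2) by blast
  have cAs: "\<And>C. C \<in> \<A> \<Longrightarrow> convex C" using insert.prems(2) by blast
  have hi: "\<And>A' B. A' \<in> insert A \<A> \<Longrightarrow> B \<in> insert A \<A> \<Longrightarrow> A' \<inter> B \<inter> D \<noteq> {}"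
    using insert.prems(3) by blast
  have cD: "convex (D \<inter> A)" using cA insert.prems(1) convex_Int by blast
  have ne: "D \<inter> A \<noteq> {}" using hi[of A A] by blast
  have pw: "C \<inter> E \<inter> (D \<inter> A) \<noteq> {}" if CE: "C \<in> \<A>" "E \<in> \<A>" for C E
  proof -
    have i1: "A \<inter> C \<inter> D \<noteq> {}" "A \<inter> E \<inter> D \<noteq> {}" "C \<inter> E \<inter> D \<noteq> {}"
      using hi[of A C] hi[of A E] hi[of C E] CE by auto
    obtain a where a: "a \<in> D \<inter> A" "a \<in> C" using i1(1) by blast
    obtain b where b: "b \<in> C" "b \<in> E" using i1(3) by blast
    obtain c where c: "c \<in> D \<inter> A" "c \<in> E" using i1(2) by blast
    obtain x where "x \<in> D \<inter> A" "x \<in> C" "x \<in> E"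
      using helly3[OF cD cAs[OF CE(1)] cAs[OF CE(2)] a b c] by blast
    then show "C \<inter> E \<inter> (D \<inter> A) \<noteq> {}" by blast
  qed
  obtain x where "x \<in> D \<inter> A" "\<forall>C\<in>\<A>. x \<in> C" using insert.IH[OF cD cAs pw ne] by blast
  then show ?case by blast
qed

lemma helly:
  assumes "finite \<A>" "\<forall>A\<in>\<A>. convex A" "\<forall>A\<in>\<A>. \<forall>B\<in>\<A>. A \<inter> B \<noteq> {}"
  shows "\<exists>x\<in>T. \<forall>A\<in>\<A>. x \<in> A"
proof -
  have "T \<noteq> {}" using tree by (simp add: is_tree_def)
  moreover have "\<forall>A\<in>\<A>. \<forall>B\<in>\<A>. A \<inter> B \<inter> T \<noteq> {}"
  proof (intro ballI)
    fix A B assume "A \<in> \<A>" "B \<in> \<A>"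
    then have "A \<inter> B \<noteq> {}" "A \<subseteq> T" using assms by (auto simp: convex_def)
    then show "A \<inter> B \<inter> T \<noteq> {}" by blast
  qed
  ultimately show ?thesis using helly_gen[OF assms(1), of T] assms(2) convex_T by blast
qed

lemma key:
  assumes gp: "graph_path T F Lij" "graph_path T F Lik" "graph_path T F Ljk"
      "graph_path T F Li" "graph_path T F Lj"
    and x: "x \<in> set Lij" "x \<in> set Lik" "x \<in> set Ljk" "x \<notin> set Li" "x \<notin> set Lj"
    and p: "p \<in> set Li" "p \<in> set Lij" and q: "q \<in> set Lj" "q \<in> set Lij"
    and dij: "set Li \<inter> set Lj = {}"
    and m1: "set Li \<inter> set Lik \<noteq> {}" and m2: "set Lj \<inter> set Ljk \<noteq> {}"
    and n1: "set Lj \<inter> set Lik = {}" and n2: "set Li \<inter> set Ljk = {}"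
    and c: "conn (T - {x}) p q"
  shows False
proof -
  have d: "x \<noteq> p" "p \<noteq> q" "x \<noteq> q" using x p q dij by auto
  have sT: "set Li \<subseteq> T" "set Lj \<subseteq> T" "set Lik \<subseteq> T" "set Ljk \<subseteq> T" using gp by (auto simp: graph_path_def)
  have sc: "successively F Li" "successively F Lj" "successively F Lik" "successively F Ljk"
    using gp by (auto simp: graph_path_def)
  consider "\<not> conn (T - {p}) x q" | "\<not> conn (T - {x}) p q" | "\<not> conn (T - {q}) x p"
    using between[OF gp(1) x(1) p(2) q(2) d(1) d(2) d(3)] by blast
  then show False
  proof cases
    case 1
    obtain q' where q': "q' \<in> set Lj" "q' \<in> set Ljk" using m2 by blast
    have "p \<notin> set Ljk" "p \<notin> set Lj" using p n2 dij by auto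
    then have "set Ljk \<subseteq> T - {p}" "set Lj \<subseteq> T - {p}" using sT by auto
    then have "conn (T - {p}) x q'" "conn (T - {p}) q' q"
      using connL[OF sc(4), of "T - {p}" x q'] connL[OF sc(2), of "T - {p}" q' q] x q' q by auto
    then show False using 1 conn_trans by blast
  next
    case 2 then show False using c by simp
  next
    case 3
    obtain p' where p': "p' \<in> set Li" "p' \<in> set Lik" using m1 by blast
    have "q \<notin> set Lik" "q \<notin> set Li" using q n1 dij by auto
    then have "set Lik \<subseteq> T - {q}" "set Li \<subseteq> T - {q}" using sT by auto
    then have "conn (T - {q}) x p'" "conn (T - {q}) p' p"
      using connL[OF sc(3), of "T - {q}" x p'] connL[OF sc(1), of "T - {q}" p' p] x p' p by auto
    then show False using 3 conn_trans by blast
  qed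
qed

end



definition cvp :: "nat \<Rightarrow> nat \<Rightarrow> avert" where "cvp i j = Cv (min i j) (max i j)"

lemma cvp_K: "i \<noteq> j \<Longrightarrow> 1 \<le> i \<Longrightarrow> i \<le> n \<Longrightarrow> 1 \<le> j \<Longrightarrow> j \<le> n \<Longrightarrow> cvp i j \<in> An_K n"
  unfolding cvp_def An_K_def by (cases "i < j") (auto simp: min_def max_def)

lemma cvp_E: "An_E (Sv t) (cvp i j) \<longleftrightarrow> t = i \<or> t = j"
  unfolding cvp_def by (auto simp: min_def max_def)

lemma Sv_V: "1 \<le> t \<Longrightarrow> t \<le> n \<Longrightarrow> Sv t \<in> An_V n"
  unfolding An_V_def An_S_def by auto

lemma K_V: "An_K n \<subseteq> An_V n" unfolding An_V_def by auto

lemma finite_K: "finite (An_K n)"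
proof -
  have "An_K n \<subseteq> (\<lambda>(i, j). Cv i j) ` ({..n} \<times> {..n})" unfolding An_K_def by auto
  then show ?thesis by (rule finite_subset) auto
qed

lemma third: "1 \<le> (i::nat) \<Longrightarrow> i \<le> n \<Longrightarrow> 1 \<le> j \<Longrightarrow> j \<le> n \<Longrightarrow> (n::nat) \<ge> 3 \<Longrightarrow> \<exists>k. 1 \<le> k \<and> k \<le> n \<and> k \<noteq> i \<and> k \<noteq> j"
proof -
  assume "n \<ge> 3"
  have "card ({1..n} - {i, j}) \<ge> card {1..n} - card {i, j}" by (rule diff_card_le_card_Diff) auto
  moreover have "card {i, j} \<le> 2" by (simp add: card_insert_le_m1)
  ultimately have "card ({1..n} - {i, j}) > 0" using \<open>n \<ge> 3\<close> by simp
  then obtain k where "k \<in> {1..n} - {i, j}" by (metis card_gt_0_iff ex_in_conv)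
  then show ?thesis by auto
qed

lemma (in tr) degree_lemma:
  assumes M: "vpt_model (An_V n) An_E T F P" and n: "n \<ge> 4"
  shows "\<exists>x\<in>T. card {y\<in>T. F x y} \<ge> n"
proof -
  have pth: "\<And>v. v \<in> An_V n \<Longrightarrow> \<exists>L. graph_path T F L \<and> P v = set L"
    using M unfolding vpt_model_def is_tree_path_def by blast
  have inter: "\<And>u v. u \<in> An_V n \<Longrightarrow> v \<in> An_V n \<Longrightarrow> u \<noteq> v \<Longrightarrow> An_E u v \<longleftrightarrow> P u \<inter> P v \<noteq> {}"
    using M unfolding vpt_model_def by blast
  have Pne: "\<And>v. v \<in> An_V n \<Longrightarrow> P v \<noteq> {}"
  proof -
    fix v assume "v \<in> An_V n"
    then obtain L where "graph_path T F L" "P v = set L" using pth by blast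
    then show "P v \<noteq> {}" by (simp add: graph_path_def)
  qed
  have fin: "finite (P ` An_K n)" using finite_K by simp
  have cvx: "\<forall>A\<in>P ` An_K n. convex A"
  proof
    fix A assume "A \<in> P ` An_K n"
    then obtain v where "v \<in> An_K n" "A = P v" by blast
    then obtain L where "graph_path T F L" "A = set L" using pth K_V by blast
    then show "convex A" using convex_path by simp
  qed
  have pw: "\<forall>A\<in>P ` An_K n. \<forall>B\<in>P ` An_K n. A \<inter> B \<noteq> {}"
  proof (intro ballI)
    fix A B assume "A \<in> P ` An_K n" "B \<in> P ` An_K n"
    then obtain u v where uv: "u \<in> An_K n" "v \<in> An_K n" "A = P u" "B = P v" by blast
    show "A \<inter> B \<noteq> {}"
    proof (cases "u = v")
      case True then show ?thesis using uv Pne K_V by auto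
    next
      case False
      have "An_E u v" using uv False unfolding An_K_def by auto
      then show ?thesis using inter[of u v] uv False K_V by auto
    qed
  qed
  obtain x where xT: "x \<in> T" and xK: "\<And>v. v \<in> An_K n \<Longrightarrow> x \<in> P v"
    using helly[OF fin cvx pw] by blast
  have xS: "x \<notin> P (Sv t)" if t: "1 \<le> t" "t \<le> n" for t
  proof -
    obtain a where a: "1 \<le> a" "a \<le> n" "a \<noteq> t" using third[of t n t] t n by auto
    obtain b where b: "1 \<le> b" "b \<le> n" "b \<noteq> t" "b \<noteq> a" using third[of t n a] t n a by auto
    have "cvp a b \<in> An_K n" using cvp_K a b by auto
    moreover have "\<not> An_E (Sv t) (cvp a b)" using cvp_E a b by auto
    moreover have "Sv t \<noteq> cvp a b" by (simp add: cvp_def)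
    ultimately have "P (Sv t) \<inter> P (cvp a b) = {}" using inter[of "Sv t" "cvp a b"] Sv_V t K_V by auto
    then show ?thesis using xK \<open>cvp a b \<in> An_K n\<close> by blast
  qed
  define nb where "nb t = (SOME y. F x y \<and> (\<exists>a\<in>P (Sv t). conn (T - {x}) y a))" for t
  have nbp: "F x (nb t) \<and> (\<exists>a\<in>P (Sv t). conn (T - {x}) (nb t) a)" if t: "1 \<le> t" "t \<le> n" for t
  proof -
    obtain Lt where Lt: "graph_path T F Lt" "P (Sv t) = set Lt" using pth Sv_V t by blast
    define a where "a = hd Lt"
    have aP: "a \<in> P (Sv t)" "a \<in> T" using Lt unfolding a_def graph_path_def by auto
    have ax: "a \<noteq> x" using aP xS t by auto
    obtain g where g: "graph_path T F g" "hd g = x" "last g = a" using T_conn xT aP by blast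
    have gne: "g \<noteq> []" using g by (simp add: graph_path_def)
    then obtain g' where g': "g = x # g'" using g(2) by (cases g) auto
    have g'ne: "g' \<noteq> []" using g' g(3) ax by auto
    have e: "F x (hd g')" using g(1) g' g'ne by (auto simp: graph_path_def successively_Cons)
    have sg: "successively F g'" using g(1) g' by (auto simp: graph_path_def successively_Cons)
    have st: "set g' \<subseteq> T - {x}" using g(1) g' by (auto simp: graph_path_def)
    have "last g' = a" using g'ne g(3) g' by simp
    then have "conn (T - {x}) (hd g') a" using connL[OF sg st, of "hd g'" "last g'"] g'ne last_in_set by fastforce
    then have "\<exists>y. F x y \<and> (\<exists>a\<in>P (Sv t). conn (T - {x}) y a)" using e aP by blast
    then show ?thesis unfolding nb_def by (rule someI_ex)
  qed
  have inj: "inj_on nb {1..n}"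
  proof (rule inj_onI, rule ccontr)
    fix i j assume i: "i \<in> {1..n}" and j: "j \<in> {1..n}" and e: "nb i = nb j" and ne: "i \<noteq> j"
    obtain k where k: "1 \<le> k" "k \<le> n" "k \<noteq> i" "k \<noteq> j" using third[of i n j] i j n by auto
    obtain Li where Li: "graph_path T F Li" "P (Sv i) = set Li" using pth Sv_V[of i n] i by force
    obtain Lj where Lj: "graph_path T F Lj" "P (Sv j) = set Lj" using pth Sv_V[of j n] j by force
    have Kij: "cvp i j \<in> An_K n" using cvp_K i j ne by auto
    have Kik: "cvp i k \<in> An_K n" using cvp_K i k by auto
    have Kjk: "cvp j k \<in> An_K n" using cvp_K j k by auto
    obtain Lij where Lij: "graph_path T F Lij" "P (cvp i j) = set Lij" using pth Kij K_V by blast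
    obtain Lik where Lik: "graph_path T F Lik" "P (cvp i k) = set Lik" using pth Kik K_V by blast
    obtain Ljk where Ljk: "graph_path T F Ljk" "P (cvp j k) = set Ljk" using pth Kjk K_V by blast
    have SV: "Sv i \<in> An_V n" "Sv j \<in> An_V n" using Sv_V i j by auto
    have KV: "cvp i j \<in> An_V n" "cvp i k \<in> An_V n" "cvp j k \<in> An_V n" using Kij Kik Kjk K_V by auto
    have nSK: "\<And>t a b. Sv t \<noteq> cvp a b" by (simp add: cvp_def)
    have I: "\<And>t a b. Sv t \<in> An_V n \<Longrightarrow> cvp a b \<in> An_V n \<Longrightarrow> (t = a \<or> t = b) \<longleftrightarrow> P (Sv t) \<inter> P (cvp a b) \<noteq> {}"
    proof -
      fix t a b assume "Sv t \<in> An_V n" "cvp a b \<in> An_V n"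
      then have "An_E (Sv t) (cvp a b) \<longleftrightarrow> P (Sv t) \<inter> P (cvp a b) \<noteq> {}"
        using inter[of "Sv t" "cvp a b"] nSK[of t a b] by blast
      then show "(t = a \<or> t = b) \<longleftrightarrow> P (Sv t) \<inter> P (cvp a b) \<noteq> {}" by (simp add: cvp_E)
    qed
    have pq1: "set Li \<inter> set Lij \<noteq> {}" using I[OF SV(1) KV(1)] Li Lij by simp
    have pq2: "set Lj \<inter> set Lij \<noteq> {}" using I[OF SV(2) KV(1)] Lj Lij by simp
    have m1: "set Li \<inter> set Lik \<noteq> {}" using I[OF SV(1) KV(2)] Li Lik by simp
    have m2: "set Lj \<inter> set Ljk \<noteq> {}" using I[OF SV(2) KV(3)] Lj Ljk by simp
    have n1: "set Lj \<inter> set Lik = {}" using I[OF SV(2) KV(2)] Lj Lik ne k by auto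
    have n2: "set Li \<inter> set Ljk = {}" using I[OF SV(1) KV(3)] Li Ljk ne k by auto
    have dij: "set Li \<inter> set Lj = {}" using inter[OF SV] ne Li Lj by auto
    obtain p where p: "p \<in> set Li" "p \<in> set Lij" using pq1 by blast
    obtain q where q: "q \<in> set Lj" "q \<in> set Lij" using pq2 by blast
    have xs: "x \<in> set Lij" "x \<in> set Lik" "x \<in> set Ljk" using xK Kij Kik Kjk Lij Lik Ljk by auto
    have xn: "x \<notin> set Li" "x \<notin> set Lj" using xS i j Li Lj by auto
    obtain ai where ai: "ai \<in> set Li" "conn (T - {x}) (nb i) ai" using nbp i Li by auto
    obtain aj where aj: "aj \<in> set Lj" "conn (T - {x}) (nb j) aj" using nbp j Lj by auto
    have stL: "set Li \<subseteq> T - {x}" "set Lj \<subseteq> T - {x}" using Li Lj xn by (auto simp: graph_path_def)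
    have "conn (T - {x}) p ai" using connL[OF gp_succ[OF Li(1)] stL(1)] p ai by simp
    moreover have "conn (T - {x}) ai aj" using conn_trans[OF conn_sym1[OF ai(2)]] aj(2) e by simp
    moreover have "conn (T - {x}) aj q" using connL[OF gp_succ[OF Lj(1)] stL(2)] q aj by simp
    ultimately have c: "conn (T - {x}) p q" using conn_trans by blast
    show False using key[OF Lij(1) Lik(1) Ljk(1) Li(1) Lj(1) xs xn p q dij m1 m2 n1 n2 c] .
  qed
  have sub: "nb ` {1..n} \<subseteq> {y\<in>T. F x y}"
  proof
    fix y assume "y \<in> nb ` {1..n}"
    then obtain t where "t \<in> {1..n}" "y = nb t" by blast
    then have "F x y" using nbp by auto
    then show "y \<in> {y\<in>T. F x y}" using F_T by blast
  qed
  have "finite {y\<in>T. F x y}" using tree by (simp add: is_tree_def)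
  then have "card (nb ` {1..n}) \<le> card {y\<in>T. F x y}" using sub card_mono by blast
  then have "n \<le> card {y\<in>T. F x y}" using card_image[OF inj] by simp
  then show ?thesis using xT by blast
qed




definition sF :: "nat \<Rightarrow> nat \<Rightarrow> nat \<Rightarrow> bool" where
  "sF n a b \<longleftrightarrow> (a = 0 \<and> 1 \<le> b \<and> b \<le> n) \<or> (b = 0 \<and> 1 \<le> a \<and> a \<le> n)"

fun sP :: "avert \<Rightarrow> nat set" where
  "sP (Sv i) = {i}"
| "sP (Cv i j) = {i, 0, j}"

lemma star_tree: assumes n: "n \<ge> 1" shows "is_tree {0..n} (sF n)"
  unfolding is_tree_def
proof (intro conjI)
  show "finite {0..n}" by simp
  show "{0..n} \<noteq> {}" by simp
next
  show "\<forall>x y. sF n x y \<longrightarrow> x \<in> {0..n} \<and> y \<in> {0..n} \<and> x \<noteq> y \<and> sF n y x"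
    unfolding sF_def by auto
next
  show "\<forall>u\<in>{0..n}. \<forall>v\<in>{0..n}. \<exists>xs. graph_path {0..n} (sF n) xs \<and> hd xs = u \<and> last xs = v"
  proof (intro ballI)
  fix u v assume u: "u \<in> {0..n}" and v: "v \<in> {0..n}"
  show "\<exists>xs. graph_path {0..n} (sF n) xs \<and> hd xs = u \<and> last xs = v"
  proof (cases "u = v")
    case True then show ?thesis using u by (intro exI[of _ "[u]"]) (auto simp: graph_path_def)
  next
    case False
    show ?thesis
    proof (cases "u = 0 \<or> v = 0")
      case True then show ?thesis using u v False
        by (intro exI[of _ "[u, v]"]) (auto simp: graph_path_def sF_def)
    next
      case F2: False then show ?thesis using u v False
        by (intro exI[of _ "[u, 0, v]"]) (auto simp: graph_path_def sF_def)
    qed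
  qed
  qed
next
  show "\<not> (\<exists>xs. graph_path {0..n} (sF n) xs \<and> 3 \<le> length xs \<and> sF n (last xs) (hd xs))"
  proof
    assume "\<exists>xs. graph_path {0..n} (sF n) xs \<and> 3 \<le> length xs \<and> sF n (last xs) (hd xs)"
    then obtain xs where g: "graph_path {0..n} (sF n) xs" "3 \<le> length xs" "sF n (last xs) (hd xs)" by blast
    then obtain a b c r where xs: "xs = a # b # c # r"
      by (metis One_nat_def Suc_le_length_iff numeral_3_eq_3)
    have e: "sF n a b" "sF n b c" "distinct (a # b # c # r)" using g(1) xs by (auto simp: graph_path_def)
    show False
    proof (cases "b = 0")
      case True
      then have "a \<noteq> 0" using e by auto
      then have "last xs = 0" using g(3) xs by (auto simp: sF_def)
      moreover have "last xs \<in> set (c # r)" using xs by simp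
      ultimately show False using e True by auto
    next
      case False
      then have "a = 0" "c = 0" using e(1,2) by (auto simp: sF_def)
      then show False using e(3) by simp
    qed
  qed
qed

lemma star_deg: assumes n: "n \<ge> 1" shows "max_degree_le {0..n} (sF n) n"
  unfolding max_degree_le_def
proof
  fix x assume x: "x \<in> {0..n}"
  show "card {y \<in> {0..n}. sF n x y} \<le> n"
  proof (cases "x = 0")
    case True
    then have "{y \<in> {0..n}. sF n x y} = {1..n}" by (auto simp: sF_def)
    then show ?thesis by simp
  next
    case False
    then have "{y \<in> {0..n}. sF n x y} \<subseteq> {0}" by (auto simp: sF_def)
    then have "card {y \<in> {0..n}. sF n x y} \<le> card {0::nat}" by (rule card_mono[rotated]) simp
    then show ?thesis using n by simp
  qed
qed

lemma star_model: assumes n: "n \<ge> 1" shows "vpt_model (An_V n) An_E {0..n} (sF n) sP"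
  unfolding vpt_model_def
proof (intro conjI ballI impI)
  show "is_tree {0..n} (sF n)" using star_tree[OF n] .
next
  fix v assume v: "v \<in> An_V n"
  show "is_tree_path {0..n} (sF n) (sP v)"
  proof (cases v)
    case (Sv i)
    then show ?thesis using v unfolding is_tree_path_def An_V_def An_S_def An_K_def
      by (intro exI[of _ "[i]"]) (auto simp: graph_path_def)
  next
    case (Cv i j)
    then have "1 \<le> i" "i < j" "j \<le> n" using v unfolding An_V_def An_S_def An_K_def by auto
    then show ?thesis using Cv unfolding is_tree_path_def
      by (intro exI[of _ "[i, 0, j]"]) (auto simp: graph_path_def sF_def)
  qed
next
  fix u v assume u: "u \<in> An_V n" and v: "v \<in> An_V n" and ne: "u \<noteq> v"
  have posu: "\<And>i j. u = Cv i j \<Longrightarrow> 1 \<le> i \<and> 1 \<le> j" "\<And>i. u = Sv i \<Longrightarrow> 1 \<le> i"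
    using u unfolding An_V_def An_S_def An_K_def by auto
  have posv: "\<And>i j. v = Cv i j \<Longrightarrow> 1 \<le> i \<and> 1 \<le> j" "\<And>i. v = Sv i \<Longrightarrow> 1 \<le> i"
    using v unfolding An_V_def An_S_def An_K_def by auto
  show "An_E u v \<longleftrightarrow> sP u \<inter> sP v \<noteq> {}"
  proof (cases u)
    case (Sv i) note U = this
    show ?thesis
    proof (cases v)
      case (Sv j) then show ?thesis using U ne by auto
    next
      case (Cv j k) then show ?thesis using U posu by auto
    qed
  next
    case (Cv i j) note U = this
    show ?thesis
    proof (cases v)
      case (Sv k) then show ?thesis using U posv by auto
    next
      case (Cv k l) then show ?thesis using U ne by auto
    qed
  qed
qed




lemma cvp_E2: "An_E (cvp i j) (Sv t) \<longleftrightarrow> t = i \<or> t = j"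
  unfolding cvp_def by (auto simp: min_def max_def)

lemma Sv_in_V: "Sv p \<in> An_V n \<Longrightarrow> 1 \<le> p \<and> p \<le> n"
  unfolding An_V_def An_S_def An_K_def by auto

lemma sun_pair:
  assumes sun: "induced_sun (An_V n) An_E k s c" and ab: "a < k" "b < k" "a \<noteq> b"
    "b \<noteq> Suc a mod k" "a \<noteq> Suc b mod k" and sp: "s a = Sv p" "s b = Sv q"
  shows "\<exists>v\<in>An_K n. \<exists>i<k. \<exists>j<k. i \<noteq> j \<and> j \<noteq> Suc i mod k \<and> i \<noteq> Suc j mod k
                   \<and> An_E v (s i) \<and> An_E v (s j)"
proof -
  have V: "s a \<in> An_V n" "s b \<in> An_V n" "inj_on s {..<k}" using sun ab unfolding induced_sun_def by auto
  have "s a \<noteq> s b"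
  proof
    assume "s a = s b"
    then have "a = b" using inj_onD[OF V(3)] ab(1,2) by simp
    then show False using ab(3) by simp
  qed
  then have pq: "p \<noteq> q" using sp by auto
  have r: "1 \<le> p \<and> p \<le> n" "1 \<le> q \<and> q \<le> n" using V Sv_in_V sp by auto
  have "cvp p q \<in> An_K n" using cvp_K pq r by auto
  moreover have "An_E (cvp p q) (s a)" "An_E (cvp p q) (s b)" using sp cvp_E2 by auto
  ultimately show ?thesis using ab by blast
qed

lemma sun_ok:
  assumes n: "n \<ge> 4" and kk: "k = 4 \<or> (odd k \<and> k \<ge> 5)" and sun: "induced_sun (An_V n) An_E k s c"
  shows "\<exists>v\<in>An_K n. \<exists>i<k. \<exists>j<k. i \<noteq> j \<and> j \<noteq> Suc i mod k \<and> i \<noteq> Suc j mod k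
                   \<and> An_E v (s i) \<and> An_E v (s j)"
proof -
  have k4: "k \<ge> 4" using kk by auto
  have stab: "\<And>i j. i < k \<Longrightarrow> j < k \<Longrightarrow> \<not> An_E (s i) (s j)" and inj: "inj_on s {..<k}"
    using sun unfolding induced_sun_def by auto
  have one: False if "a < k" "b < k" "a \<noteq> b" "s a = Cv i j" "s b = Cv i' j'" for a b i j i' j'
  proof -
    have "s a \<noteq> s b"
    proof
      assume "s a = s b"
      then have "a = b" using inj_onD[OF inj] that(1,2) by simp
      then show False using that(3) by simp
    qed
    then have "An_E (s a) (s b)" using that by auto
    then show False using stab[OF that(1,2)] by simp
  qed
  have m1: "1 mod k = 1" "3 mod k = 3" using k4 by auto
  have m2: "4 mod k \<noteq> 1" using kk by auto
  show ?thesis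
  proof (cases "\<exists>p q. s 0 = Sv p \<and> s 2 = Sv q")
    case True
    then obtain p q where "s 0 = Sv p" "s 2 = Sv q" by blast
    then show ?thesis using sun_pair[OF sun, of 0 2 p q] k4 m1 by (auto simp: numeral_3_eq_3)
  next
    case False
    then have c02: "(\<exists>i j. s 0 = Cv i j) \<or> (\<exists>i j. s 2 = Cv i j)" by (metis avert.exhaust)
    have "\<exists>p. s 1 = Sv p"
    proof (cases "s 1")
      case (Cv i j) then show ?thesis using c02 one[of 1 0] one[of 1 2] k4 by fastforce
    qed simp
    moreover have "\<exists>q. s 3 = Sv q"
    proof (cases "s 3")
      case (Cv i j) then show ?thesis using c02 one[of 3 0] one[of 3 2] k4 by fastforce
    qed simp
    ultimately obtain p q where "s 1 = Sv p" "s 3 = Sv q" by blast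
    moreover have "1 \<noteq> Suc 3 mod k" using m2 by simp
    ultimately show ?thesis using sun_pair[OF sun, of 1 3 p q] k4 m1 by (auto simp: numeral_3_eq_3)
  qed
qed

theorem mainTheorem11:
  fixes n :: nat
  assumes "n \<ge> 4"
  shows "SVS (An_V n) An_E (An_S n) (An_K n)
    \<and> branch_vertices (An_V n) An_E (An_K n) = An_S n
    \<and> (\<forall>v\<in>An_S n. \<forall>w\<in>An_S n. branch_adj An_E (An_K n) v w \<longleftrightarrow> v \<noteq> w)
    \<and> in_h21 n (An_V n) An_E \<and> \<not> in_h21 (n - 1) (An_V n) An_E"
proof -
  have n1: "n \<ge> 1" using assms by simp
  have model: "vpt_model (An_V n) An_E {0..n} (sF n) sP" using star_model[OF n1] .
  have h21: "in_h21 n (An_V n) An_E" unfolding in_h21_def using model star_deg[OF n1] by blast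
  have sp: "split_partition (An_V n) An_E (An_S n) (An_K n)"
    unfolding split_partition_def An_V_def An_S_def An_K_def by auto
  have deg2: "\<forall>v\<in>An_K n. card {x\<in>An_S n. An_E v x} \<le> 2"
  proof
    fix v assume "v \<in> An_K n"
    then obtain i j where v: "v = Cv i j" unfolding An_K_def by auto
    have "{x\<in>An_S n. An_E v x} \<subseteq> {Sv i, Sv j}" unfolding v An_S_def by auto
    then have "card {x\<in>An_S n. An_E v x} \<le> card {Sv i, Sv j}" by (rule card_mono[rotated]) simp
    also have "\<dots> \<le> 2" by (simp add: card_insert_if)
    finally show "card {x\<in>An_S n. An_E v x} \<le> 2" .
  qed
  have svs: "SVS (An_V n) An_E (An_S n) (An_K n)"
    unfolding SVS_def VPT_def using sp model deg2 sun_ok[OF assms] by blast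
  have bv: "branch_vertices (An_V n) An_E (An_K n) = An_S n"
  proof
    show "branch_vertices (An_V n) An_E (An_K n) \<subseteq> An_S n"
      unfolding branch_vertices_def An_V_def by auto
  next
    show "An_S n \<subseteq> branch_vertices (An_V n) An_E (An_K n)"
    proof
      fix x assume x: "x \<in> An_S n"
      then obtain i where i: "x = Sv i" "1 \<le> i" "i \<le> n" unfolding An_S_def by auto
      obtain j where j: "1 \<le> j" "j \<le> n" "j \<noteq> i" using third[of i n i] i assms by auto
      have "cvp i j \<in> An_K n" using cvp_K i j by auto
      moreover have "An_E x (cvp i j)" using i cvp_E by simp
      moreover have "x \<in> An_V n - An_K n" using x unfolding An_V_def An_S_def An_K_def by auto
      ultimately show "x \<in> branch_vertices (An_V n) An_E (An_K n)"
        unfolding branch_vertices_def by blast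
    qed
  qed
  have ba: "\<forall>v\<in>An_S n. \<forall>w\<in>An_S n. branch_adj An_E (An_K n) v w \<longleftrightarrow> v \<noteq> w"
  proof (intro ballI)
    fix v w assume v: "v \<in> An_S n" and w: "w \<in> An_S n"
    obtain a where a: "v = Sv a" "1 \<le> a" "a \<le> n" using v unfolding An_S_def by auto
    obtain b where b: "w = Sv b" "1 \<le> b" "b \<le> n" using w unfolding An_S_def by auto
    show "branch_adj An_E (An_K n) v w \<longleftrightarrow> v \<noteq> w"
    proof
      assume "branch_adj An_E (An_K n) v w"
      then show "v \<noteq> w" unfolding branch_adj_def by auto
    next
      assume ne: "v \<noteq> w"
      then have ab: "a \<noteq> b" using a b by auto
      obtain t where t: "1 \<le> t" "t \<le> n" "t \<noteq> a" "t \<noteq> b" using third[of a n b] a b assms by auto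
      have K: "cvp a b \<in> An_K n" "cvp a t \<in> An_K n" "cvp b t \<in> An_K n"
        using cvp_K a b t ab by auto
      have "\<not> An_E v w" using a b by simp
      moreover have "An_E (cvp a b) v \<and> An_E (cvp a b) w" using a b cvp_E2 by auto
      moreover have "An_E (cvp a t) v \<and> \<not> An_E (cvp a t) w" using a b t ab cvp_E2 by auto
      moreover have "An_E (cvp b t) w \<and> \<not> An_E (cvp b t) v" using a b t ab cvp_E2 by auto
      ultimately show "branch_adj An_E (An_K n) v w" unfolding branch_adj_def using K by blast
    qed
  qed
  have nh: "\<not> in_h21 (n - 1) (An_V n) An_E"
  proof
    assume "in_h21 (n - 1) (An_V n) An_E"
    then obtain T F P where M: "vpt_model (An_V n) An_E T F P" and D: "max_degree_le T F (n - 1)"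
      unfolding in_h21_def by blast
    have "is_tree T F" using M unfolding vpt_model_def by blast
    then interpret tr T F by unfold_locales
    obtain x where "x \<in> T" "card {y\<in>T. F x y} \<ge> n" using degree_lemma[OF M assms] by blast
    moreover have "card {y\<in>T. F x y} \<le> n - 1" using D \<open>x \<in> T\<close> unfolding max_degree_le_def by blast
    ultimately show False using assms by linarith
  qed
  show ?thesis using svs bv ba h21 nh by blast
qed


end
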